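(* Let $(X_i)_{i\in\mathbb{T}}$ ($\mathbb{T}$ one of $\mathbb{Z},\mathbb{N},\mathbb{N}\setminus\{0\}$) be a stationary sequence of $\mathbb{R}^d$-valued random variables such that the distribution of $X_1$ is supported on a compact set $\mathbb{M}\subset\mathbb{R}^d$. Let $n\ge1$, $\epsilon>0$, and let $k,r$ be positive integers with $kr\le n$. For $1\le i\le k$ let $Y_{i,r}=(X_{(i-1)r+1},\ldots,X_{ir})^t\in\mathbb{R}^{dr}$, let $\mathbb{Y}_k=\{Y_{1,r},\ldots,Y_{k,r}\}$, and let $\mathbb{M}_{dr}\subset\mathbb{R}^{dr}$ be the support of $Y_{1,r}$. Then, with $\mathbb{X}_n=\{X_1,\ldots,X_n\}$, $$\mathbb{P}\big(d_H(\mathbb{X}_n,\mathbb{M})>\epsilon\big)\le \mathbb{P}\big(d_H(\mathbb{Y}_k,\mathbb{M}_{dr})>\epsilon\big)\le \frac{\sup_{x\in\mathbb{M}_{dr}}\mathbb{P}\big(\min_{1\le i\le k}\|Y_{i,r}-x\|>\epsilon/2\big)}{1-\sup_{x\in\mathbb{M}_{dr}}\mathbb{P}\big(\|Y_{1,r}-x\|>\epsilon/4\big)}.$$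
   Context: The support of a random vector is the smallest closed set carrying its full mass. Norms are Euclidean. $d_H$ is the Hausdorff distance between closed sets: $d_H(A,B)=\max\big(\sup_{x\in A}\inf_{y\in B}\|x-y\|,\ \sup_{x\in B}\inf_{y\in A}\|x-y\|\big)$; finite sets of random points are viewed as subsets of the ambient Euclidean space. *)

theory Defs
  imports "HOL-Probability.Probability"
begin

text \<open>Stationarity of a sequence indexed by the naturals, required only for the
  indices \<open>\<ge> 1\<close> (this covers index sets Z, N and N without 0): all finite-dimensional
  distributions of consecutive windows starting at any index \<open>t \<ge> 1\<close> are shift-invariant.\<close>
definition stationary :: "'w measure \<Rightarrow> (nat \<Rightarrow> 'w \<Rightarrow> 'a::topological_space) \<Rightarrow> bool" where
  "stationary M X \<longleftrightarrow>
     (\<forall>m t h. t \<ge> 1 \<longrightarrow>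
        distr M (\<Pi>\<^sub>M j\<in>{..<m}. borel) (\<lambda>w. \<lambda>j\<in>{..<m}. X (t + j) w)
      = distr M (\<Pi>\<^sub>M j\<in>{..<m}. borel) (\<lambda>w. \<lambda>j\<in>{..<m}. X (t + h + j) w))"

definition closed_wrt :: "('b \<Rightarrow> 'b \<Rightarrow> real) \<Rightarrow> 'b set \<Rightarrow> 'b set \<Rightarrow> bool" where
  "closed_wrt d S C \<longleftrightarrow> C \<subseteq> S \<and> (\<forall>x\<in>S. (\<forall>e>0. \<exists>y\<in>C. d x y < e) \<longrightarrow> x \<in> C)"

definition rv_support :: "'w measure \<Rightarrow> ('b \<Rightarrow> 'b \<Rightarrow> real) \<Rightarrow> 'b set \<Rightarrow> ('w \<Rightarrow> 'b) \<Rightarrow> 'b set" where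
  "rv_support M d S Z = \<Inter>{C. closed_wrt d S C \<and> (AE w in M. Z w \<in> C)}"

definition hausdorff_dist :: "('b \<Rightarrow> 'b \<Rightarrow> real) \<Rightarrow> 'b set \<Rightarrow> 'b set \<Rightarrow> ereal" where
  "hausdorff_dist d A B =
     max (SUP x\<in>A. INF y\<in>B. ereal (d x y)) (SUP x\<in>B. INF y\<in>A. ereal (d x y))"

text \<open>R^(dr) modelled as blocks: extensional functions on \<open>{..<r}\<close> with values in R^d,
  with the Euclidean norm of the concatenated vector.\<close>
definition blocks :: "nat \<Rightarrow> (nat \<Rightarrow> 'a) set" where
  "blocks r = PiE {..<r} (\<lambda>_. UNIV)"

definition block_dist :: "nat \<Rightarrow> (nat \<Rightarrow> 'a::real_normed_vector) \<Rightarrow> (nat \<Rightarrow> 'a) \<Rightarrow> real" where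
  "block_dist r y z = sqrt (\<Sum>j<r. (norm (y j - z j))\<^sup>2)"

end

theory Submission
  imports Defs
begin


lemma bd_L2: "block_dist r y z = L2_set (\<lambda>j. norm (y j - z j)) {..<r}"
  unfolding block_dist_def L2_set_def by simp

lemma bd_sym: "block_dist r y z = block_dist r z y"
  unfolding block_dist_def by (simp add: norm_minus_commute)

lemma bd_self: "block_dist r y y = 0"
  unfolding block_dist_def by simp

lemma bd_nonneg: "block_dist r y z \<ge> 0"
  unfolding block_dist_def by (simp add: sum_nonneg)

lemma bd_tri: "block_dist r x z \<le> block_dist r x y + block_dist r y z"
proof -
  have "block_dist r x z \<le> L2_set (\<lambda>j. norm (x j - y j) + norm (y j - z j)) {..<r}"
    unfolding bd_L2
    by (rule L2_set_mono) (auto intro: norm_diff_triangle_le)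
  also have "\<dots> \<le> block_dist r x y + block_dist r y z"
    unfolding bd_L2 by (rule L2_set_triangle_ineq)
  finally show ?thesis .
qed

lemma bd_ge: "j < r \<Longrightarrow> norm (y j - z j) \<le> block_dist r y z"
  unfolding bd_L2 by (rule member_le_L2_set) auto

lemma blocks_dense:
  obtains Q :: "(nat \<Rightarrow> 'a::euclidean_space) set" where "countable Q"
    "\<And>y e. e > 0 \<Longrightarrow> \<exists>q\<in>Q. block_dist r y q < e"
proof -
  from countable_dense_setE obtain Qa :: "'a set"
    where Qa: "countable Qa" "\<And>Y :: 'a set. open Y \<Longrightarrow> Y \<noteq> {} \<Longrightarrow> \<exists>d\<in>Qa. d \<in> Y"
    by auto
  have ch: "\<exists>q\<in>Qa. dist x q < e" if "e > 0" for x e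
    using Qa(2)[of "ball x e"] that by auto
  show ?thesis
  proof (rule that[of "PiE {..<r} (\<lambda>_. Qa)"])
    show "countable (PiE {..<r} (\<lambda>_. Qa))" by (rule countable_PiE) (auto simp: Qa)
  next
    fix y :: "nat \<Rightarrow> 'a" and e :: real assume e: "e > 0"
    define e' where "e' = e / (real r + 1)"
    have e': "e' > 0" using e by (simp add: e'_def)
    define q where "q = (\<lambda>j\<in>{..<r}. SOME q. q \<in> Qa \<and> dist (y j) q < e')"
    have q: "q j \<in> Qa \<and> dist (y j) (q j) < e'" if "j < r" for j
      using someI_ex[OF ch[OF e', of "y j", unfolded Bex_def]] that by (simp add: q_def)
    have "block_dist r y q \<le> (\<Sum>j<r. norm (y j - q j))"
      unfolding bd_L2 by (rule L2_set_le_sum) auto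
    also have "\<dots> \<le> (\<Sum>j<r. e')"
      by (rule sum_mono) (use q in \<open>auto simp: dist_norm less_imp_le\<close>)
    also have "\<dots> < e" using e by (simp add: e'_def field_simps)
    finally have "block_dist r y q < e" .
    moreover have "q \<in> PiE {..<r} (\<lambda>_. Qa)" using q by (auto simp: q_def)
    ultimately show "\<exists>q\<in>PiE {..<r} (\<lambda>_. Qa). block_dist r y q < e" by blast
  qed
qed




lemma support_AE:
  fixes M :: "'w measure" and d :: "'b \<Rightarrow> 'b \<Rightarrow> real" and Q :: "'b set"
  assumes Q: "countable Q" and dense: "\<And>y e. y \<in> S \<Longrightarrow> e > 0 \<Longrightarrow> \<exists>q\<in>Q. d y q < e"
    and sym: "\<And>x y. d x y = d y x" and tri: "\<And>x y z. d x z \<le> d x y + d y z"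
    and Z'S: "\<And>w. w \<in> space M \<Longrightarrow> Z' w \<in> S"
    and transfer: "\<And>q \<rho>. q \<in> Q \<Longrightarrow> (AE w in M. \<not> d q (Z w) < \<rho>) \<Longrightarrow> (AE w in M. \<not> d q (Z' w) < \<rho>)"
  shows "AE w in M. Z' w \<in> rv_support M d S Z"
proof -
  define N where "N = {(q, \<rho>). q \<in> Q \<and> \<rho> \<in> \<rat> \<and> (AE w in M. \<not> d q (Z w) < \<rho>)}"
  have "countable N"
  proof (rule countable_subset)
    show "N \<subseteq> Q \<times> \<rat>" by (auto simp: N_def)
    show "countable (Q \<times> \<rat>)" using Q countable_rat by blast
  qed
  moreover have "\<forall>y\<in>N. AE w in M. \<not> d (fst y) (Z' w) < snd y"
  proof
    fix y assume "y \<in> N"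
    then show "AE w in M. \<not> d (fst y) (Z' w) < snd y"
      using transfer[of "fst y" "snd y"] by (auto simp: N_def split: prod.splits)
  qed
  ultimately have ae1: "AE w in M. \<forall>y\<in>N. \<not> d (fst y) (Z' w) < snd y"
    by (subst AE_ball_countable) auto
  have ae2: "AE w in M. Z' w \<in> S" using Z'S by (rule AE_I2)
  show ?thesis using ae1 ae2
  proof eventually_elim
    case (elim w)
    show ?case unfolding rv_support_def
    proof (intro InterI, clarify, rule ccontr)
      fix C assume C: "closed_wrt d S C" and aeC: "AE w in M. Z w \<in> C" and nC: "Z' w \<notin> C"
      from C nC elim(2) obtain e where e: "e > 0" "\<And>y. y \<in> C \<Longrightarrow> \<not> d (Z' w) y < e"
        unfolding closed_wrt_def by blast
      obtain q where q: "q \<in> Q" "d (Z' w) q < e / 3" using dense[OF elim(2), of "e/3"] e by auto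
      obtain \<rho> where \<rho>: "\<rho> \<in> \<rat>" "e / 3 < \<rho>" "\<rho> < 2 * e / 3"
        using Rats_dense_in_real[of "e/3" "2*e/3"] e by auto
      have "AE w in M. \<not> d q (Z w) < \<rho>" using aeC
      proof eventually_elim
        case (elim w')
        have "e \<le> d (Z' w) (Z w')" using e(2)[OF elim] by simp
        also have "\<dots> \<le> d (Z' w) q + d q (Z w')" by (rule tri)
        finally show ?case using q \<rho> by simp
      qed
      then have "(q, \<rho>) \<in> N" using q \<rho> by (auto simp: N_def)
      then have "\<not> d q (Z' w) < \<rho>" using elim(1) by force
      then show False using q \<rho> sym[of q "Z' w"] by simp
    qed
  qed
qed

lemma separable_subset:
  fixes d :: "'b \<Rightarrow> 'b \<Rightarrow> real" and Q :: "'b set"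
  assumes Q: "countable Q" and dense: "\<And>y e. y \<in> T \<Longrightarrow> e > 0 \<Longrightarrow> \<exists>q\<in>Q. d y q < e"
    and sym: "\<And>x y. d x y = d y x" and tri: "\<And>x y z. d x z \<le> d x y + d y z"
  obtains D where "countable D" "D \<subseteq> T" "\<And>y e. y \<in> T \<Longrightarrow> e > 0 \<Longrightarrow> \<exists>x\<in>D. d y x < e"
proof -
  define I where "I = {(q, m::nat). q \<in> Q \<and> (\<exists>y\<in>T. d q y < 1 / Suc m)}"
  define f where "f = (\<lambda>(q, m::nat). SOME y. y \<in> T \<and> d q y < 1 / Suc m)"
  have f: "f (q, m) \<in> T \<and> d q (f (q, m)) < 1 / Suc m" if "(q, m) \<in> I" for q m
  proof -
    have "\<exists>y. y \<in> T \<and> d q y < 1 / Suc m" using that by (auto simp: I_def)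
    from someI_ex[OF this] show ?thesis by (simp add: f_def)
  qed
  show ?thesis
  proof (rule that[of "f ` I"])
    have "I \<subseteq> Q \<times> UNIV" by (auto simp: I_def)
    then show "countable (f ` I)" using Q by (intro countable_image) (auto intro: countable_subset)
    show "f ` I \<subseteq> T" using f by auto
  next
    fix y e assume y: "y \<in> T" and e: "(e::real) > 0"
    obtain m :: nat where m: "1 / Suc m < e / 2"
      using reals_Archimedean[of "e/2"] e by (auto simp: inverse_eq_divide)
    obtain q where q: "q \<in> Q" "d y q < 1 / Suc m" using dense[OF y, of "1 / Suc m"] by auto
    have I: "(q, m) \<in> I" using q y sym[of y q] by (auto simp: I_def)
    have "d y (f (q, m)) \<le> d y q + d q (f (q, m))" by (rule tri)
    also have "\<dots> < e" using f[OF I] q m by simp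
    finally show "\<exists>x\<in>f ` I. d y x < e" using I by blast
  qed
qed




lemma ereal_lt_INF_finite:
  assumes "finite A" "A \<noteq> {}" "\<And>a. a \<in> A \<Longrightarrow> c < f a"
  shows "ereal c < (INF a\<in>A. ereal (f a))"
proof -
  have "(INF a\<in>A. ereal (f a)) = Min ((\<lambda>a. ereal (f a)) ` A)"
    using assms by (intro cInf_eq_Min) auto
  then show ?thesis using assms by (simp add: Min_gr_iff)
qed

lemma ereal_lt_INF_D: "ereal c < (INF a\<in>A. ereal (f a)) \<Longrightarrow> a \<in> A \<Longrightarrow> c < f a"
proof -
  assume h: "ereal c < (INF a\<in>A. ereal (f a))" "a \<in> A"
  have "(INF a\<in>A. ereal (f a)) \<le> ereal (f a)" using h(2) by (rule INF_lower)
  with h(1) have "ereal c < ereal (f a)" by (rule order_less_le_trans)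
  then show ?thesis by simp
qed

lemma ereal_lt_INF_margin:
  assumes "ereal c < (INF a\<in>A. ereal (f a))"
  shows "\<exists>m::nat. \<forall>y\<in>A. c + 1 / Suc m \<le> f y"
proof -
  obtain t' where t: "ereal c < ereal t'" "ereal t' < (INF a\<in>A. ereal (f a))"
    using ereal_dense2[OF assms] by blast
  define t where "t = ereal t'"
  have t': "t = ereal t'" by (simp add: t_def)
  obtain m :: nat where m: "1 / Suc m < t' - c"
    using reals_Archimedean[of "t' - c"] t by (auto simp: inverse_eq_divide)
  have "\<forall>y\<in>A. c + 1 / Suc m \<le> f y"
  proof
    fix y assume "y \<in> A"
    then have "ereal t' < ereal (f y)" using t(2) INF_lower[of y A "\<lambda>a. ereal (f a)"] by (meson order_less_le_trans)
    then show "c + 1 / Suc m \<le> f y" using m t' by simp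
  qed
  then show ?thesis by blast
qed

lemma ereal_le_INF: "(\<And>y. y \<in> A \<Longrightarrow> c \<le> f y) \<Longrightarrow> ereal c \<le> (INF a\<in>A. ereal (f a))"
  by (rule INF_greatest) simp

lemma distr_transfer:
  assumes "distr M N f = distr M N g" "f \<in> measurable M N" "g \<in> measurable M N"
    "{x \<in> space N. P x} \<in> sets N" "AE w in M. P (f w)"
  shows "AE w in M. P (g w)"
proof -
  have "AE x in distr M N f. P x" using assms by (subst AE_distr_iff) auto
  then have "AE x in distr M N g. P x" by (simp only: assms(1)[symmetric])
  then show ?thesis using assms by (subst (asm) AE_distr_iff) auto
qed




theorem proposition3p1:
  fixes M :: "'w measure" and X :: "nat \<Rightarrow> 'w \<Rightarrow> 'a::euclidean_space"
    and MM :: "'a set" and n k r :: nat and \<epsilon> :: real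
  assumes "prob_space M"
    and "\<And>i. X i \<in> borel_measurable M"
    and "stationary M X"
    and "MM = rv_support M dist UNIV (X 1)" and "compact MM"
    and "n \<ge> 1" and "\<epsilon> > 0" and "k \<ge> 1" and "r \<ge> 1" and "k * r \<le> n"
  defines "Y \<equiv> (\<lambda>i w. (\<lambda>j\<in>{..<r}. X ((i - 1) * r + 1 + j) w))"
    and "Mdr \<equiv> rv_support M (block_dist r) (blocks r) (\<lambda>w. (\<lambda>j\<in>{..<r}. X (1 + j) w))"
  shows "measure M {w\<in>space M. hausdorff_dist dist ((\<lambda>i. X i w) ` {1..n}) MM > ereal \<epsilon>}
           \<le> measure M {w\<in>space M. hausdorff_dist (block_dist r) ((\<lambda>i. Y i w) ` {1..k}) Mdr > ereal \<epsilon>}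
       \<and> ((SUP x\<in>Mdr. measure M {w\<in>space M. block_dist r (Y 1 w) x > \<epsilon> / 4}) < 1 \<longrightarrow>
           measure M {w\<in>space M. hausdorff_dist (block_dist r) ((\<lambda>i. Y i w) ` {1..k}) Mdr > ereal \<epsilon>}
           \<le> (SUP x\<in>Mdr. measure M {w\<in>space M. Min ((\<lambda>i. block_dist r (Y i w) x) ` {1..k}) > \<epsilon> / 2})
              / (1 - (SUP x\<in>Mdr. measure M {w\<in>space M. block_dist r (Y 1 w) x > \<epsilon> / 4})))"
proof -
  interpret prob_space M by fact
  note Xm[measurable] = assms(2)
  define P where "P = (\<Pi>\<^sub>M j\<in>{..<r}. (borel :: 'a measure))"
  define Z1 where "Z1 = (\<lambda>w. (\<lambda>j\<in>{..<r}. X (1 + j) w))"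
  have Ym[measurable]: "Y i \<in> measurable M P" for i unfolding Y_def P_def by measurable
  have Z1m[measurable]: "Z1 \<in> measurable M P" unfolding Z1_def P_def by measurable
  have Y1: "Y 1 = Z1" by (simp add: Y_def Z1_def)
  have Mdr: "Mdr = rv_support M (block_dist r) (blocks r) Z1" by (simp add: Mdr_def Z1_def)
  have Yb: "Y i w \<in> blocks r" for i w by (simp add: Y_def blocks_def)
  have statY: "distr M P Z1 = distr M P (Y i)" if "i \<ge> 1" for i
  proof -
    have "distr M P Z1 = distr M P (\<lambda>w. \<lambda>j\<in>{..<r}. X (1 + (i - 1) * r + j) w)"
      using assms(3) unfolding stationary_def P_def Z1_def by blast
    also have "(\<lambda>w. \<lambda>j\<in>{..<r}. X (1 + (i - 1) * r + j) w) = Y i"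
      by (simp add: Y_def add_ac)
    finally show ?thesis .
  qed
  have ballP: "{f \<in> space P. \<not> block_dist r q f < \<rho>} \<in> sets P" for q \<rho>
    unfolding block_dist_def P_def by measurable
  obtain Qb :: "(nat \<Rightarrow> 'a) set" where Qb: "countable Qb" "\<And>y e. e > 0 \<Longrightarrow> \<exists>q\<in>Qb. block_dist r y q < e"
    using blocks_dense by blast
  have AE_Y: "AE w in M. Y i w \<in> Mdr" if "i \<ge> 1" for i
    unfolding Mdr
  proof (rule support_AE[OF Qb(1)])
    show "\<exists>q\<in>Qb. block_dist r y q < e" if "e > 0" for y e using Qb(2) that by blast
    show "block_dist r x y = block_dist r y x" for x y by (rule bd_sym)
    show "block_dist r x z \<le> block_dist r x y + block_dist r y z" for x y z by (rule bd_tri)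
    show "Y i w \<in> blocks r" for w by (rule Yb)
    show "AE w in M. \<not> block_dist r q (Y i w) < \<rho>" if "AE w in M. \<not> block_dist r q (Z1 w) < \<rho>" for q \<rho>
      using distr_transfer[OF statY[OF \<open>i \<ge> 1\<close>] Z1m Ym ballP[of q \<rho>]] that by blast
  qed
  obtain Qa :: "'a set" where Qa: "countable Qa" "\<And>Y :: 'a set. open Y \<Longrightarrow> Y \<noteq> {} \<Longrightarrow> \<exists>d\<in>Qa. d \<in> Y"
    using countable_dense_setE by blast
  have AE_X: "AE w in M. X j w \<in> MM" if "j \<ge> 1" for j
    unfolding assms(4)
  proof (rule support_AE[OF Qa(1)])
    show "\<exists>q\<in>Qa. dist y q < e" if "e > 0" for y e using Qa(2)[of "ball y e"] that by auto
    show "dist x y = dist y x" for x y :: 'a by (rule dist_commute)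
    show "dist x z \<le> dist x y + dist y z" for x y z :: 'a by (rule dist_triangle)
    show "X j w \<in> UNIV" for w by simp
    fix q \<rho> assume h: "AE w in M. \<not> dist q (X 1 w) < \<rho>"
    define P1 where "P1 = (\<Pi>\<^sub>M j\<in>{..<1::nat}. (borel :: 'a measure))"
    have "distr M P1 (\<lambda>w. \<lambda>i\<in>{..<1::nat}. X (1 + i) w) = distr M P1 (\<lambda>w. \<lambda>i\<in>{..<1::nat}. X (1 + (j - 1) + i) w)"
      using assms(3) unfolding stationary_def P1_def by blast
    moreover have "(\<lambda>w. \<lambda>i\<in>{..<1::nat}. X (1 + i) w) \<in> measurable M P1" unfolding P1_def by measurable
    moreover have "(\<lambda>w. \<lambda>i\<in>{..<1::nat}. X (1 + (j - 1) + i) w) \<in> measurable M P1" unfolding P1_def by measurable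
    moreover have "{f \<in> space P1. \<not> dist q (f 0) < \<rho>} \<in> sets P1" unfolding P1_def by measurable
    moreover have "AE w in M. \<not> dist q ((\<lambda>i\<in>{..<1::nat}. X (1 + i) w) 0) < \<rho>" using h by simp
    ultimately have "AE w in M. \<not> dist q ((\<lambda>i\<in>{..<1::nat}. X (1 + (j - 1) + i) w) 0) < \<rho>"
      by (rule distr_transfer[where P="\<lambda>f. \<not> dist q (f 0) < \<rho>"])
    then show "AE w in M. \<not> dist q (X j w) < \<rho>" using that by simp
  qed
  obtain D where D: "countable D" "D \<subseteq> Mdr" "\<And>y e. y \<in> Mdr \<Longrightarrow> e > 0 \<Longrightarrow> \<exists>x\<in>D. block_dist r y x < e"
    using separable_subset[OF Qb(1), of Mdr "block_dist r"] Qb(2) bd_sym bd_tri by metis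
  have bdY: "block_dist r (Y i w) y = sqrt (\<Sum>j<r. (norm (X ((i - 1) * r + 1 + j) w - y j))\<^sup>2)" for i w y
    unfolding block_dist_def Y_def by (intro arg_cong[where f=sqrt] sum.cong) auto
  have bdY': "block_dist r y (Y i w) = sqrt (\<Sum>j<r. (norm (y j - X ((i - 1) * r + 1 + j) w))\<^sup>2)" for i w y
    unfolding block_dist_def Y_def by (intro arg_cong[where f=sqrt] sum.cong) auto
  have bdYY: "block_dist r (Y i w) (Y i' w') = sqrt (\<Sum>j<r. (norm (X ((i - 1) * r + 1 + j) w - X ((i' - 1) * r + 1 + j) w'))\<^sup>2)" for i w i' w'
    unfolding block_dist_def Y_def by (intro arg_cong[where f=sqrt] sum.cong) auto
  have Mdr_ne: "Mdr \<noteq> {}"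
  proof
    assume "Mdr = {}"
    then have "AE w in M. False" using AE_Y[of 1] by simp
    then show False by simp
  qed
  define R where "R = {w\<in>space M. ereal \<epsilon> < hausdorff_dist (block_dist r) ((\<lambda>i. Y i w) ` {1..k}) Mdr}"
  define R1 where "R1 = {w\<in>space M. \<exists>i\<in>{1..k}. \<exists>m::nat. \<forall>y\<in>D. \<epsilon> + 1 / Suc m \<le> block_dist r (Y i w) y}"
  define A' where "A' = {w\<in>space M. \<exists>x\<in>D. \<forall>i\<in>{1..k}. \<epsilon> < block_dist r x (Y i w)}"
  have R_char: "w \<in> R \<longleftrightarrow> w \<in> space M \<and> ((\<exists>i\<in>{1..k}. ereal \<epsilon> < (INF y\<in>Mdr. ereal (block_dist r (Y i w) y)))
      \<or> (\<exists>x\<in>Mdr. \<forall>i\<in>{1..k}. \<epsilon> < block_dist r x (Y i w)))" for w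
  proof -
    have eq2: "ereal \<epsilon> < (INF a\<in>(\<lambda>i. Y i w) ` {1..k}. ereal (block_dist r x a)) \<longleftrightarrow> (\<forall>i\<in>{1..k}. \<epsilon> < block_dist r x (Y i w))" for x
    proof
      assume "ereal \<epsilon> < (INF a\<in>(\<lambda>i. Y i w) ` {1..k}. ereal (block_dist r x a))"
      then show "\<forall>i\<in>{1..k}. \<epsilon> < block_dist r x (Y i w)"
        using ereal_lt_INF_D[of \<epsilon> "\<lambda>a. block_dist r x a" "(\<lambda>i. Y i w) ` {1..k}"] by blast
    next
      assume h: "\<forall>i\<in>{1..k}. \<epsilon> < block_dist r x (Y i w)"
      show "ereal \<epsilon> < (INF a\<in>(\<lambda>i. Y i w) ` {1..k}. ereal (block_dist r x a))"
        by (rule ereal_lt_INF_finite) (use h assms(8) in auto)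
    qed
    show ?thesis unfolding R_def hausdorff_dist_def less_max_iff_disj less_SUP_iff mem_Collect_eq
      using eq2 by blast
  qed
  have part_a: "(ereal \<epsilon> < (INF y\<in>Mdr. ereal (block_dist r (Y i w) y))) \<longleftrightarrow>
      (\<exists>m::nat. \<forall>y\<in>D. \<epsilon> + 1 / Suc m \<le> block_dist r (Y i w) y)" for i w
  proof
    assume "ereal \<epsilon> < (INF y\<in>Mdr. ereal (block_dist r (Y i w) y))"
    from ereal_lt_INF_margin[OF this] show "\<exists>m::nat. \<forall>y\<in>D. \<epsilon> + 1 / Suc m \<le> block_dist r (Y i w) y"
      using D(2) by blast
  next
    assume "\<exists>m::nat. \<forall>y\<in>D. \<epsilon> + 1 / Suc m \<le> block_dist r (Y i w) y"
    then obtain m :: nat where m: "\<And>y. y \<in> D \<Longrightarrow> \<epsilon> + 1 / Suc m \<le> block_dist r (Y i w) y" by blast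
    have "ereal (\<epsilon> + 1 / Suc m) \<le> (INF y\<in>Mdr. ereal (block_dist r (Y i w) y))"
    proof (rule ereal_le_INF)
      fix y assume y: "y \<in> Mdr"
      show "\<epsilon> + 1 / Suc m \<le> block_dist r (Y i w) y"
      proof (rule field_le_epsilon)
        fix e :: real assume e: "0 < e"
        obtain x where x: "x \<in> D" "block_dist r y x < e" using D(3)[OF y e] by blast
        have "\<epsilon> + 1 / Suc m \<le> block_dist r (Y i w) x" by (rule m[OF x(1)])
        also have "\<dots> \<le> block_dist r (Y i w) y + block_dist r y x" by (rule bd_tri)
        finally show "\<epsilon> + 1 / Suc m \<le> block_dist r (Y i w) y + e" using x(2) by simp
      qed
    qed
    moreover have "ereal \<epsilon> < ereal (\<epsilon> + 1 / Suc m)" by simp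
    ultimately show "ereal \<epsilon> < (INF y\<in>Mdr. ereal (block_dist r (Y i w) y))" by (rule order_less_le_trans[rotated])
  qed
  have part_b: "(\<exists>x\<in>Mdr. \<forall>i\<in>{1..k}. \<epsilon> < block_dist r x (Y i w)) \<longleftrightarrow>
      (\<exists>x\<in>D. \<forall>i\<in>{1..k}. \<epsilon> < block_dist r x (Y i w))" for w
  proof
    assume "\<exists>x\<in>Mdr. \<forall>i\<in>{1..k}. \<epsilon> < block_dist r x (Y i w)"
    then obtain x where x: "x \<in> Mdr" "\<And>i. i \<in> {1..k} \<Longrightarrow> \<epsilon> < block_dist r x (Y i w)" by blast
    define \<delta> where "\<delta> = Min ((\<lambda>i. block_dist r x (Y i w) - \<epsilon>) ` {1..k})"
    have \<delta>: "\<delta> > 0" unfolding \<delta>_def using x(2) assms(8) by (auto simp: Min_gr_iff)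
    have \<delta>le: "\<delta> \<le> block_dist r x (Y i w) - \<epsilon>" if "i \<in> {1..k}" for i
      unfolding \<delta>_def using that by (intro Min_le) auto
    obtain x' where x': "x' \<in> D" "block_dist r x x' < \<delta>" using D(3)[OF x(1) \<delta>] by blast
    have "\<epsilon> < block_dist r x' (Y i w)" if "i \<in> {1..k}" for i
    proof -
      have "block_dist r x (Y i w) \<le> block_dist r x x' + block_dist r x' (Y i w)" by (rule bd_tri)
      then show ?thesis using \<delta>le[OF that] x'(2) by simp
    qed
    then show "\<exists>x\<in>D. \<forall>i\<in>{1..k}. \<epsilon> < block_dist r x (Y i w)" using x'(1) by blast
  next
    assume "\<exists>x\<in>D. \<forall>i\<in>{1..k}. \<epsilon> < block_dist r x (Y i w)"
    then show "\<exists>x\<in>Mdr. \<forall>i\<in>{1..k}. \<epsilon> < block_dist r x (Y i w)" using D(2) by blast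
  qed
  have R_eq: "R = R1 \<union> A'"
    unfolding R1_def A'_def using R_char part_a part_b by blast
  have "countable D" by (rule D(1))
  have R1m: "R1 \<in> sets M" unfolding R1_def
    apply (intro sets.sets_Collect_countable_Ex' sets.sets_Collect_countable_Ex sets.sets_Collect_countable_All' \<open>countable D\<close>)
     apply (unfold bdY)
     apply measurable
    done
  have A'm: "A' \<in> sets M" unfolding A'_def
    apply (intro sets.sets_Collect_countable_Ex' \<open>countable D\<close>)
    apply (unfold bdY')
    apply measurable
    done
  have Rm: "R \<in> sets M" using R1m A'm R_eq by simp
  have claimC: "\<exists>y\<in>Mdr. norm (y 0 - x) < \<delta>" if x: "x \<in> MM" and \<delta>: "\<delta> > 0" for x \<delta>
  proof (rule ccontr)
    assume nex: "\<not> (\<exists>y\<in>Mdr. norm (y 0 - x) < \<delta>)"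
    define C where "C = {z::'a. \<delta> \<le> dist z x}"
    have Ccl: "closed_wrt dist UNIV C" unfolding closed_wrt_def
    proof (intro conjI ballI impI)
      fix z :: 'a assume h: "\<forall>e>0. \<exists>y\<in>C. dist z y < e"
      have "\<delta> \<le> dist z x"
      proof (rule field_le_epsilon)
        fix e :: real assume "0 < e"
        then obtain y where y: "y \<in> C" "dist z y < e" using h by blast
        have "\<delta> \<le> dist y x" using y(1) by (simp add: C_def)
        also have "\<dots> \<le> dist y z + dist z x" by (rule dist_triangle)
        finally show "\<delta> \<le> dist z x + e" using y(2) by (simp add: dist_commute)
      qed
      then show "z \<in> C" by (simp add: C_def)
    qed simp
    have "AE w in M. X 1 w \<in> C" using AE_Y[of 1, OF order_refl]
    proof eventually_elim
      case (elim w)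
      then have "\<not> norm (Y 1 w 0 - x) < \<delta>" using nex by blast
      moreover have "Y 1 w 0 = X 1 w" using assms(9) by (simp add: Y_def)
      ultimately show ?case by (simp add: C_def dist_norm)
    qed
    with Ccl have "MM \<subseteq> C" unfolding assms(4) rv_support_def by blast
    with x have "\<delta> \<le> dist x x" by (auto simp: C_def)
    with \<delta> show False by simp
  qed
  have AE_Xall: "AE w in M. \<forall>j\<in>{1..n}. X j w \<in> MM"
    by (rule eventually_ball_finite) (auto intro: AE_X)
  have LR: "AE w in M. w \<in> {w\<in>space M. hausdorff_dist dist ((\<lambda>i. X i w) ` {1..n}) MM > ereal \<epsilon>} \<longrightarrow> w \<in> R"
    using AE_Xall
  proof eventually_elim
    case (elim w)
    show ?case
    proof
      assume wL: "w \<in> {w\<in>space M. hausdorff_dist dist ((\<lambda>i. X i w) ` {1..n}) MM > ereal \<epsilon>}"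
      then have ws: "w \<in> space M" by simp
      from wL have "(\<exists>j\<in>{1..n}. ereal \<epsilon> < (INF y\<in>MM. ereal (dist (X j w) y))) \<or>
          (\<exists>x\<in>MM. ereal \<epsilon> < (INF a\<in>(\<lambda>i. X i w) ` {1..n}. ereal (dist x a)))"
        unfolding hausdorff_dist_def less_max_iff_disj less_SUP_iff mem_Collect_eq by blast
      then show "w \<in> R"
      proof
        assume "\<exists>j\<in>{1..n}. ereal \<epsilon> < (INF y\<in>MM. ereal (dist (X j w) y))"
        then obtain j where j: "j \<in> {1..n}" "ereal \<epsilon> < (INF y\<in>MM. ereal (dist (X j w) y))" by blast
        have "\<epsilon> < dist (X j w) (X j w)"
          by (rule ereal_lt_INF_D[OF j(2)]) (use elim j in blast)
        with assms(7) show "w \<in> R" by simp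
      next
        assume "\<exists>x\<in>MM. ereal \<epsilon> < (INF a\<in>(\<lambda>i. X i w) ` {1..n}. ereal (dist x a))"
        then obtain x where x: "x \<in> MM" "ereal \<epsilon> < (INF a\<in>(\<lambda>i. X i w) ` {1..n}. ereal (dist x a))" by blast
        have xj: "\<epsilon> < dist x (X j w)" if "j \<in> {1..n}" for j
          by (rule ereal_lt_INF_D[OF x(2)]) (use that in blast)
        define \<delta> where "\<delta> = Min ((\<lambda>j. dist x (X j w) - \<epsilon>) ` {1..n})"
        have \<delta>: "\<delta> > 0" unfolding \<delta>_def using xj assms(6) by (auto simp: Min_gr_iff)
        have \<delta>le: "\<delta> \<le> dist x (X j w) - \<epsilon>" if "j \<in> {1..n}" for j
          unfolding \<delta>_def using that by (intro Min_le) auto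
        obtain y where y: "y \<in> Mdr" "norm (y 0 - x) < \<delta>" using claimC[OF x(1) \<delta>] by blast
        have "\<epsilon> < block_dist r y (Y i w)" if i: "i \<in> {1..k}" for i
        proof -
          define j where "j = (i - 1) * r + 1"
          have "(i - 1) * r \<le> (k - 1) * r" using i by (intro mult_right_mono) auto
          also have "\<dots> < k * r" using assms(8,9) by (simp add: algebra_simps)
          finally have lt: "(i - 1) * r < k * r" .
          have jn: "j \<in> {1..n}" using lt assms(10) unfolding j_def atLeastAtMost_iff by linarith
          have Yi0: "Y i w 0 = X j w" using assms(9) by (simp add: Y_def j_def)
          have "norm (y 0 - Y i w 0) \<le> block_dist r y (Y i w)" using assms(9) by (intro bd_ge) simp
          moreover have "dist x (X j w) \<le> norm (x - y 0) + norm (y 0 - X j w)"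
            unfolding dist_norm by (rule norm_diff_triangle_le) auto
          moreover have "norm (x - y 0) = norm (y 0 - x)" by (rule norm_minus_commute)
          ultimately show ?thesis using \<delta>le[OF jn] y(2) Yi0 by simp
        qed
        then show "w \<in> R" using R_char ws y(1) by blast
      qed
    qed
  qed
  have part1: "measure M {w\<in>space M. hausdorff_dist dist ((\<lambda>i. X i w) ` {1..n}) MM > ereal \<epsilon>} \<le> measure M R"
    by (rule finite_measure_mono_AE[OF LR Rm])
  define s where "s = (SUP x\<in>Mdr. measure M {w\<in>space M. block_dist r (Y 1 w) x > \<epsilon> / 4})"
  define S2 where "S2 = (SUP x\<in>Mdr. measure M {w\<in>space M. Min ((\<lambda>i. block_dist r (Y i w) x) ` {1..k}) > \<epsilon> / 2})"
  have s_ge: "measure M {w\<in>space M. block_dist r (Y 1 w) x > \<epsilon> / 4} \<le> s" if "x \<in> Mdr" for x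
    unfolding s_def by (rule cSUP_upper[OF that]) (intro bdd_aboveI2[where M=1] prob_le_1)
  have S2_ge: "measure M {w\<in>space M. Min ((\<lambda>i. block_dist r (Y i w) x) ` {1..k}) > \<epsilon> / 2} \<le> S2" if "x \<in> Mdr" for x
    unfolding S2_def by (rule cSUP_upper[OF that]) (intro bdd_aboveI2[where M=1] prob_le_1)
  have S2_nonneg: "0 \<le> S2"
  proof -
    obtain x where "x \<in> Mdr" using Mdr_ne by blast
    from S2_ge[OF this] show ?thesis by (meson measure_nonneg order_trans)
  qed
  have AE_Yall: "AE w in M. \<forall>i\<in>{1..k}. Y i w \<in> Mdr"
    by (rule eventually_ball_finite) (auto intro: AE_Y)
  have RA: "AE w in M. w \<in> R \<longrightarrow> w \<in> A'"
    using AE_Yall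
  proof eventually_elim
    case (elim w)
    show ?case
    proof
      assume "w \<in> R"
      then have "w \<in> R1 \<or> w \<in> A'" using R_eq by blast
      then show "w \<in> A'"
      proof
        assume "w \<in> R1"
        then obtain i m where i: "i \<in> {1..k}" and m: "\<forall>y\<in>D. \<epsilon> + 1 / Suc m \<le> block_dist r (Y i w) y"
          unfolding R1_def by blast
        obtain y where y: "y \<in> D" "block_dist r (Y i w) y < \<epsilon>" using D(3)[of "Y i w" \<epsilon>] elim i assms(7) by blast
        have "0 < 1 / real (Suc m)" by simp
        moreover have "\<epsilon> + 1 / Suc m \<le> block_dist r (Y i w) y" using m y(1) by blast
        ultimately have False using y(2) by linarith
        then show "w \<in> A'" ..
      qed
    qed
  qed
  have measRA: "measure M R \<le> measure M A'" by (rule finite_measure_mono_AE[OF RA A'm])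
  have key: "(1 - s) * measure M A' \<le> S2" if s1: "s < 1"
  proof -
    interpret PS: pair_sigma_finite M M by unfold_locales
    note A'm[measurable]
    define F where "F = {p\<in>space (M \<Otimes>\<^sub>M M). fst p \<in> A' \<and> (\<forall>i\<in>{1..k}. \<epsilon> / 2 < block_dist r (Y i (fst p)) (Y 1 (snd p)))}"
    define F' where "F' = {p\<in>space (M \<Otimes>\<^sub>M M). \<forall>i\<in>{1..k}. \<epsilon> / 2 < block_dist r (Y i (fst p)) (Y 1 (snd p))}"
    have Fm: "F \<in> sets (M \<Otimes>\<^sub>M M)" unfolding F_def bdYY by measurable
    have F'm: "F' \<in> sets (M \<Otimes>\<^sub>M M)" unfolding F'_def bdYY by measurable
    have lower: "ennreal (1 - s) * indicator A' w \<le> emeasure M (Pair w -` F)" if w: "w \<in> space M" for w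
    proof (cases "w \<in> A'")
      case True
      then obtain x where x: "x \<in> D" "\<And>i. i \<in> {1..k} \<Longrightarrow> \<epsilon> < block_dist r x (Y i w)"
        unfolding A'_def by blast
      have xM: "x \<in> Mdr" using x(1) D(2) by blast
      have sub: "{w'\<in>space M. \<not> \<epsilon> / 4 < block_dist r (Y 1 w') x} \<subseteq> Pair w -` F"
      proof
        fix w' assume w': "w' \<in> {w'\<in>space M. \<not> \<epsilon> / 4 < block_dist r (Y 1 w') x}"
        have "\<epsilon> / 2 < block_dist r (Y i w) (Y 1 w')" if i: "i \<in> {1..k}" for i
        proof -
          have "block_dist r x (Y i w) \<le> block_dist r x (Y 1 w') + block_dist r (Y 1 w') (Y i w)" by (rule bd_tri)
          moreover have "block_dist r x (Y 1 w') = block_dist r (Y 1 w') x" by (rule bd_sym)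
          moreover have "block_dist r (Y 1 w') (Y i w) = block_dist r (Y i w) (Y 1 w')" by (rule bd_sym)
          ultimately show ?thesis using x(2)[OF i] w' assms(7) by simp
        qed
        then show "w' \<in> Pair w -` F" using w w' True by (simp add: F_def space_pair_measure)
      qed
      have "{w'\<in>space M. \<epsilon> / 4 < block_dist r (Y 1 w') x} \<in> sets M" unfolding bdY by measurable
      then have "measure M {w'\<in>space M. \<not> \<epsilon> / 4 < block_dist r (Y 1 w') x} = 1 - measure M {w'\<in>space M. \<epsilon> / 4 < block_dist r (Y 1 w') x}"
        by (rule prob_neg)
      also have "\<dots> \<ge> 1 - s" using s_ge[OF xM] by simp
      finally have "ennreal (1 - s) \<le> emeasure M {w'\<in>space M. \<not> \<epsilon> / 4 < block_dist r (Y 1 w') x}"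
        by (simp add: emeasure_eq_measure ennreal_leI)
      also have "\<dots> \<le> emeasure M (Pair w -` F)"
        by (rule emeasure_mono[OF sub]) (rule sets_Pair1[OF Fm])
      finally show ?thesis using True by simp
    qed simp
    have upper: "emeasure M ((\<lambda>w. (w, w')) -` F') \<le> ennreal S2" if w': "w' \<in> space M" "Y 1 w' \<in> Mdr" for w'
    proof -
      have minI: "(\<epsilon> / 2 < Min ((\<lambda>i. block_dist r (Y i w) x) ` {1..k})) \<longleftrightarrow> (\<forall>i\<in>{1..k}. \<epsilon> / 2 < block_dist r (Y i w) x)" for w x
        by (subst Min_gr_iff) (use assms(8) in auto)
      have "(\<lambda>w. (w, w')) -` F' = {w\<in>space M. \<forall>i\<in>{1..k}. \<epsilon> / 2 < block_dist r (Y i w) (Y 1 w')}"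
        using w' by (auto simp: F'_def space_pair_measure)
      also have "\<dots> = {w\<in>space M. Min ((\<lambda>i. block_dist r (Y i w) (Y 1 w')) ` {1..k}) > \<epsilon> / 2}"
        by (simp only: minI)
      finally have eq: "(\<lambda>w. (w, w')) -` F' = {w\<in>space M. Min ((\<lambda>i. block_dist r (Y i w) (Y 1 w')) ` {1..k}) > \<epsilon> / 2}" .
      show ?thesis unfolding eq using S2_ge[OF w'(2)] by (simp add: emeasure_eq_measure ennreal_leI)
    qed
    have "ennreal (1 - s) * emeasure M A' = (\<integral>\<^sup>+ w. ennreal (1 - s) * indicator A' w \<partial>M)"
      using A'm by (simp add: nn_integral_cmult_indicator)
    also have "\<dots> \<le> (\<integral>\<^sup>+ w. emeasure M (Pair w -` F) \<partial>M)"
      by (rule nn_integral_mono) (rule lower)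
    also have "\<dots> = emeasure (M \<Otimes>\<^sub>M M) F" by (rule emeasure_pair_measure_alt[OF Fm, symmetric])
    also have "\<dots> \<le> emeasure (M \<Otimes>\<^sub>M M) F'" by (rule emeasure_mono[OF _ F'm]) (auto simp: F_def F'_def)
    also have "\<dots> = (\<integral>\<^sup>+ w'. emeasure M ((\<lambda>w. (w, w')) -` F') \<partial>M)" by (rule PS.emeasure_pair_measure_alt2[OF F'm])
    also have "\<dots> \<le> (\<integral>\<^sup>+ w'. ennreal S2 \<partial>M)"
    proof (rule nn_integral_mono_AE)
      show "AE w' in M. emeasure M ((\<lambda>w. (w, w')) -` F') \<le> ennreal S2"
        using AE_Y[of 1, OF order_refl] AE_space by eventually_elim (rule upper)
    qed
    also have "\<dots> = ennreal S2" by (simp add: emeasure_space_1)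
    finally have "ennreal (1 - s) * emeasure M A' \<le> ennreal S2" .
    then have "ennreal ((1 - s) * measure M A') \<le> ennreal S2"
      using s1 by (simp add: emeasure_eq_measure ennreal_mult)
    then show ?thesis using S2_nonneg by (simp add: ennreal_le_iff)
  qed
  have part2: "s < 1 \<longrightarrow> measure M R \<le> S2 / (1 - s)"
  proof
    assume s1: "s < 1"
    have "measure M R \<le> measure M A'" by (rule measRA)
    also have "\<dots> \<le> S2 / (1 - s)" using key[OF s1] s1 by (simp add: pos_le_divide_eq mult.commute)
    finally show "measure M R \<le> S2 / (1 - s)" .
  qed
  show ?thesis using part1 part2 unfolding R_def s_def S2_def by blast
qed


end
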